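(* Let $s\in(0,2]$, $P$ a finite set of $n$ points in $(\mathbb{R}^d,\ell_s)$ and $\varepsilon>0$. For any query point $q$, the exact nearest neighbor query procedure described in the context returns a point of $\mathrm{NN}_P(q)$ with high probability.
   Context: $\mathrm{d}$ is the $\ell_s$ distance; $\mathrm{d}(x,P)=\min\{\mathrm{d}(x,p):p\in P\setminus\{x\}\}$; $\mathrm{NN}_P(x)$ is the set of $p\in P\setminus\{x\}$ with $\mathrm{d}(x,p)=\mathrm{d}(x,P)$; $N_P(x,R)$ is the set of $p\in P\setminus\{x\}$ with $\mathrm{d}(x,p)\le R$. Ingredients. (1) An $\varepsilon$-approximate nearest neighbor structure $\mathcal{T}(P,\varepsilon)$ (Har-Peled's tree of locality-sensitive hashing $(r,\varepsilon)$-PLEB structures) which fixes at preprocessing a finite set of candidate radii and, given $q$, outputs one of these radii $r$ satisfying $\mathrm{d}(q,P)\le r\le(1+\varepsilon)\mathrm{d}(q,P)$ with probability at least $1-1/n$. (2) For each candidate radius $r$, a structure $\mathcal{A}'(P,r,\varepsilon)$ which, given $q$, returns a set equal to $N_P(q,r)$ with high probability (it is the lifted locality-sensitive hashing structure for exhaustive $r$-PLEB: lift $P$ to $\mathbb{R}^{d+1}$ with last coordinate $0$, lift $q$ with last coordinate $r/((1+\varepsilon)^s-1)^{1/s}$, and report all lifted data points within distance $r(1+\frac{1}{(1+\varepsilon)^s-1})^{1/s}$ of the lifted query among those colliding with it in hash tables built from $s$-stable hash functions). Query procedure: (1) answer an $\varepsilon$-NN query with $\mathcal{T}(P,\varepsilon)$,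 obtaining $r$; (2) answer the exhaustive $r$-PLEB query with $\mathcal{A}'(P,r,\varepsilon)$, obtaining a set $S$; (3) return the point of $S$ closest to $q$, or an arbitrary point of $P$ if $S=\emptyset$. *)

theory Defs
  imports "HOL-Probability.Probability"
begin

definition ls_dist :: "real \<Rightarrow> real^'d \<Rightarrow> real^'d \<Rightarrow> real" where
  "ls_dist s x y = (\<Sum>i\<in>UNIV. \<bar>x$i - y$i\<bar> powr s) powr (1/s)"

definition ls_setdist :: "real \<Rightarrow> real^'d \<Rightarrow> (real^'d) set \<Rightarrow> real" where
  "ls_setdist s x P = Min (ls_dist s x ` (P - {x}))"

definition NN_set :: "real \<Rightarrow> (real^'d) set \<Rightarrow> real^'d \<Rightarrow> (real^'d) set" where
  "NN_set s P x = {p \<in> P - {x}. ls_dist s x p = ls_setdist s x P}"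

definition N_ball :: "real \<Rightarrow> (real^'d) set \<Rightarrow> real^'d \<Rightarrow> real \<Rightarrow> (real^'d) set" where
  "N_ball s P x R = {p \<in> P - {x}. ls_dist s x p \<le> R}"

end

theory Submission
  imports Defs
begin

theorem lemma4:
  fixes s \<epsilon> \<delta> :: real and n :: nat
    and P :: "(real^'d) set" and q :: "real^'d"
    and M :: "'w measure"
    and Rad :: "real set"
    and rad :: "'w \<Rightarrow> real"
    and Sfun :: "real \<Rightarrow> 'w \<Rightarrow> (real^'d) set"
    and out :: "'w \<Rightarrow> real^'d"
  assumes s_pos: "0 < s" and s_le: "s \<le> 2"
    and finP: "finite P" and cardP: "card P = n" and nonempty: "P - {q} \<noteq> {}"
    and eps: "0 < \<epsilon>"
    and M: "prob_space M"
    and Rad_fin: "finite Rad"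
    and rad_in: "\<forall>\<omega>\<in>space M. rad \<omega> \<in> Rad"
    and rad_meas: "\<forall>\<rho>\<in>Rad. {\<omega>\<in>space M. rad \<omega> = \<rho>} \<in> sets M"
    and S_meas: "\<forall>\<rho>\<in>Rad. {\<omega>\<in>space M. Sfun \<rho> \<omega> = N_ball s P q \<rho>} \<in> sets M"
    and T_good: "measure M {\<omega>\<in>space M. ls_setdist s q P \<le> rad \<omega>
                     \<and> rad \<omega> \<le> (1 + \<epsilon>) * ls_setdist s q P} \<ge> 1 - 1 / real n"
    and delta: "0 \<le> \<delta>"
    and A_good: "\<forall>\<rho>\<in>Rad. measure M {\<omega>\<in>space M. Sfun \<rho> \<omega> = N_ball s P q \<rho>} \<ge> 1 - \<delta>"
    and indep: "\<forall>\<rho>\<in>Rad.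
        measure M ({\<omega>\<in>space M. rad \<omega> = \<rho>} \<inter> {\<omega>\<in>space M. Sfun \<rho> \<omega> = N_ball s P q \<rho>})
        = measure M {\<omega>\<in>space M. rad \<omega> = \<rho>} * measure M {\<omega>\<in>space M. Sfun \<rho> \<omega> = N_ball s P q \<rho>}"
    and out_def: "\<forall>\<omega>\<in>space M.
        (Sfun (rad \<omega>) \<omega> \<noteq> {} \<longrightarrow> out \<omega> \<in> Sfun (rad \<omega>) \<omega>
            \<and> (\<forall>y\<in>Sfun (rad \<omega>) \<omega>. ls_dist s q (out \<omega>) \<le> ls_dist s q y))
      \<and> (Sfun (rad \<omega>) \<omega> = {} \<longrightarrow> out \<omega> \<in> P)"
  shows "\<exists>E\<in>sets M. E \<subseteq> {\<omega>\<in>space M. out \<omega> \<in> NN_set s P q}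
           \<and> measure M E \<ge> (1 - 1 / real n) * (1 - \<delta>)"
proof -
  interpret prob_space M by (rule M)
  define D where "D = ls_setdist s q P"
  define G where "G = {\<rho>\<in>Rad. D \<le> \<rho> \<and> \<rho> \<le> (1 + \<epsilon>) * D}"
  define R where "R = (\<lambda>\<rho>. {\<omega>\<in>space M. rad \<omega> = \<rho>})"
  define A where "A = (\<lambda>\<rho>. {\<omega>\<in>space M. Sfun \<rho> \<omega> = N_ball s P q \<rho>})"
  define E where "E = (\<Union>\<rho>\<in>G. R \<rho> \<inter> A \<rho>)"
  have Gfin: "finite G" using Rad_fin unfolding G_def by auto
  have GR: "G \<subseteq> Rad" unfolding G_def by auto
  have finPq: "finite (P - {q})" using finP by auto
  have Dmin: "\<And>p. p \<in> P - {q} \<Longrightarrow> D \<le> ls_dist s q p"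
    unfolding D_def ls_setdist_def using finPq by (intro Min_le) auto
  obtain y where y: "y \<in> P - {q}" "ls_dist s q y = D"
  proof -
    have "D \<in> ls_dist s q ` (P - {q})" unfolding D_def ls_setdist_def
      using finPq nonempty by (intro Min_in) auto
    thus ?thesis using that by auto
  qed
  have Esets: "E \<in> sets M" unfolding E_def R_def A_def
    using Gfin GR rad_meas S_meas by (intro sets.finite_UN) auto
  have Esub: "E \<subseteq> {\<omega>\<in>space M. out \<omega> \<in> NN_set s P q}"
  proof
    fix \<omega> assume "\<omega> \<in> E"
    then obtain \<rho> where \<rho>: "\<rho> \<in> G" "\<omega> \<in> space M" "rad \<omega> = \<rho>" "Sfun \<rho> \<omega> = N_ball s P q \<rho>"
      unfolding E_def R_def A_def by auto
    have yin: "y \<in> Sfun (rad \<omega>) \<omega>" using \<rho> y unfolding G_def N_ball_def by auto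
    hence o: "out \<omega> \<in> N_ball s P q \<rho>" "ls_dist s q (out \<omega>) \<le> ls_dist s q y"
    proof -
      have "Sfun (rad \<omega>) \<omega> \<noteq> {}" using yin by blast
      hence "out \<omega> \<in> Sfun (rad \<omega>) \<omega> \<and> (\<forall>y\<in>Sfun (rad \<omega>) \<omega>. ls_dist s q (out \<omega>) \<le> ls_dist s q y)"
        using out_def \<rho>(2) by blast
      thus "out \<omega> \<in> N_ball s P q \<rho>" "ls_dist s q (out \<omega>) \<le> ls_dist s q y"
        using \<rho>(3,4) yin by auto
    qed
    hence "out \<omega> \<in> P - {q}" unfolding N_ball_def by auto
    moreover have "ls_dist s q (out \<omega>) = D" using o(2) y(2) Dmin[OF \<open>out \<omega> \<in> P - {q}\<close>] by linarith
    ultimately show "\<omega> \<in> {\<omega>\<in>space M. out \<omega> \<in> NN_set s P q}"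
      using \<rho>(2) unfolding NN_set_def D_def by simp
  qed
  have disj1: "disjoint_family_on (\<lambda>\<rho>. R \<rho> \<inter> A \<rho>) G"
    unfolding disjoint_family_on_def R_def by auto
  have disj2: "disjoint_family_on R G"
    unfolding disjoint_family_on_def R_def by auto
  have RA_sets: "\<And>\<rho>. \<rho> \<in> G \<Longrightarrow> R \<rho> \<inter> A \<rho> \<in> sets M"
    using GR rad_meas S_meas unfolding R_def A_def by blast
  have R_sets: "\<And>\<rho>. \<rho> \<in> G \<Longrightarrow> R \<rho> \<in> sets M"
    using GR rad_meas unfolding R_def by blast
  have mE0: "measure M E = (\<Sum>\<rho>\<in>G. measure M (R \<rho> \<inter> A \<rho>))"
    unfolding E_def using RA_sets by (intro finite_measure_finite_Union[OF Gfin _ disj1]) blast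
  have mE: "measure M E = (\<Sum>\<rho>\<in>G. measure M (R \<rho>) * measure M (A \<rho>))"
    unfolding mE0
  proof (rule sum.cong[OF refl])
    fix \<rho> assume "\<rho> \<in> G"
    hence "\<rho> \<in> Rad" using GR by blast
    thus "measure M (R \<rho> \<inter> A \<rho>) = measure M (R \<rho>) * measure M (A \<rho>)"
      using indep unfolding R_def A_def by blast
  qed
  have T_eq: "{\<omega>\<in>space M. ls_setdist s q P \<le> rad \<omega> \<and> rad \<omega> \<le> (1 + \<epsilon>) * ls_setdist s q P}
      = (\<Union>\<rho>\<in>G. R \<rho>)"
    unfolding G_def R_def D_def using rad_in by auto
  have mT: "measure M (\<Union>\<rho>\<in>G. R \<rho>) = (\<Sum>\<rho>\<in>G. measure M (R \<rho>))"
    using R_sets by (intro finite_measure_finite_Union[OF Gfin _ disj2]) blast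
  have T: "(\<Sum>\<rho>\<in>G. measure M (R \<rho>)) \<ge> 1 - 1 / real n"
    using T_good unfolding T_eq mT .
  have "(\<Sum>\<rho>\<in>G. measure M (R \<rho>) * measure M (A \<rho>)) \<ge> (\<Sum>\<rho>\<in>G. measure M (R \<rho>) * (1 - \<delta>))"
  proof (rule sum_mono)
    fix \<rho> assume "\<rho> \<in> G"
    hence "\<rho> \<in> Rad" using GR by blast
    hence "1 - \<delta> \<le> measure M (A \<rho>)" using A_good unfolding A_def by blast
    thus "measure M (R \<rho>) * (1 - \<delta>) \<le> measure M (R \<rho>) * measure M (A \<rho>)"
      by (rule mult_left_mono) simp
  qed
  moreover have "(\<Sum>\<rho>\<in>G. measure M (R \<rho>) * (1 - \<delta>)) = (\<Sum>\<rho>\<in>G. measure M (R \<rho>)) * (1 - \<delta>)"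
    by (rule sum_distrib_right[symmetric])
  ultimately have lb: "measure M E \<ge> (\<Sum>\<rho>\<in>G. measure M (R \<rho>)) * (1 - \<delta>)"
    using mE by linarith
  have npos: "n \<ge> 1"
  proof -
    have "P \<noteq> {}" using nonempty by auto
    hence "card P \<noteq> 0" using finP by simp
    thus ?thesis using cardP by simp
  qed
  have "measure M E \<ge> (1 - 1 / real n) * (1 - \<delta>)"
  proof (cases "\<delta> \<le> 1")
    case True
    have "(1 - 1 / real n) * (1 - \<delta>) \<le> (\<Sum>\<rho>\<in>G. measure M (R \<rho>)) * (1 - \<delta>)"
      using T True by (intro mult_right_mono) auto
    thus ?thesis using lb by linarith
  next
    case False
    have "1 / real n \<le> 1" using npos by simp
    hence "(1 - 1 / real n) * (1 - \<delta>) \<le> 0" using False by (intro mult_nonneg_nonpos) auto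
    thus ?thesis using measure_nonneg[of M E] by linarith
  qed
  thus ?thesis using Esets Esub by blast
qed

end
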